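(* Let $f,g\in\mathbb{R}[x,y]$ with $f(0,0)=g(0,0)=0$, both regular in $x$, such that $\{f=0\}\subset\{g=0\}$ near the origin, and let $\mathscr{L}_g(f)$ be the Łojasiewicz exponent of $f$ with respect to $g$. (1) If $0<\mathscr{L}_g(f)<1$, then $\displaystyle\lim_{(x,y)\to(0,0)}\frac{g(x,y)}{f(x,y)}=0$. (2) If $\mathscr{L}_g(f)>1$, then the limit $\displaystyle\lim_{(x,y)\to(0,0)}\frac{g(x,y)}{f(x,y)}$ does not exist.
   Context: A polynomial $f=f_m+f_{m+1}+\cdots$ ($f_k$ homogeneous of degree $k$, $f_m\not\equiv0$, $m\ge1$) is regular in $x$ if $f_m(1,0)\neq0$. The Łojasiewicz exponent $\mathscr{L}_g(f)$ is the infimum of all $\alpha>0$ for which there exist $C,r>0$ with $|f(x,y)|\ge C|g(x,y)|^\alpha$ for $|(x,y)|\le r$. The limit is taken over points where $f\neq0$. *)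

theory Defs
  imports "HOL-Analysis.Analysis" "HOL-Library.Extended_Real"
begin

text \<open>A real bivariate polynomial is represented by its coefficient function
  c :: nat \<times> nat \<Rightarrow> real with finite support; c (i,j) is the coefficient of x^i y^j.\<close>

definition bipoly :: "(nat \<times> nat \<Rightarrow> real) \<Rightarrow> bool" where
  "bipoly c \<longleftrightarrow> finite {ij. c ij \<noteq> 0}"

definition beval :: "(nat \<times> nat \<Rightarrow> real) \<Rightarrow> real \<times> real \<Rightarrow> real" where
  "beval c p = (\<Sum>(i,j)\<in>{ij. c ij \<noteq> 0}. c (i,j) * fst p ^ i * snd p ^ j)"

definition hom_part :: "(nat \<times> nat \<Rightarrow> real) \<Rightarrow> nat \<Rightarrow> real \<times> real \<Rightarrow> real" where
  "hom_part c k p = (\<Sum>(i,j)\<in>{ij. c ij \<noteq> 0 \<and> fst ij + snd ij = k}. c (i,j) * fst p ^ i * snd p ^ j)"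

definition bord :: "(nat \<times> nat \<Rightarrow> real) \<Rightarrow> nat" where
  "bord c = (LEAST k. \<exists>i j. i + j = k \<and> c (i,j) \<noteq> 0)"

definition regular_x :: "(nat \<times> nat \<Rightarrow> real) \<Rightarrow> bool" where
  "regular_x c \<longleftrightarrow> (\<exists>ij. c ij \<noteq> 0) \<and> bord c \<ge> 1 \<and> hom_part c (bord c) (1,0) \<noteq> 0"

text \<open>Lojasiewicz exponent of f with respect to g (infimum in the extended reals;
  the infimum of the empty set is +\<infinity>).\<close>
definition loj_exp :: "(real \<times> real \<Rightarrow> real) \<Rightarrow> (real \<times> real \<Rightarrow> real) \<Rightarrow> ereal" where
  "loj_exp g f = Inf {ereal \<alpha> | \<alpha>. \<alpha> > 0 \<and> (\<exists>C r. C > 0 \<and> r > 0 \<and>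
      (\<forall>p. norm p \<le> r \<longrightarrow> \<bar>f p\<bar> \<ge> C * \<bar>g p\<bar> powr \<alpha>))}"

end

theory Submission
  imports Defs
begin

lemma beval_cont: "continuous_on UNIV (beval c)"
  unfolding beval_def case_prod_unfold
  by (intro continuous_intros)

theorem proposition5p1:
  fixes cf cg :: "nat \<times> nat \<Rightarrow> real"
  defines "f \<equiv> beval cf" and "g \<equiv> beval cg"
  assumes "bipoly cf" and "bipoly cg"
    and "f (0,0) = 0" and "g (0,0) = 0"
    and "regular_x cf" and "regular_x cg"
    and "\<exists>r>0. \<forall>p. norm p < r \<longrightarrow> f p = 0 \<longrightarrow> g p = 0"
  shows "(0 < loj_exp g f \<and> loj_exp g f < 1 \<longrightarrow>
            ((\<lambda>p. g p / f p) \<longlongrightarrow> 0) (at (0,0) within {p. f p \<noteq> 0}))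
       \<and> (loj_exp g f > 1 \<longrightarrow>
            \<not> (\<exists>l::real. ((\<lambda>p. g p / f p) \<longlongrightarrow> l) (at (0,0) within {p. f p \<noteq> 0})))"
proof (intro conjI impI)
  let ?F = "at (0::real,0::real) within {p. f p \<noteq> 0}"
  have gc: "(g \<longlongrightarrow> 0) ?F"
  proof -
    have "isCont g (0,0)" using beval_cont[of cg] unfolding g_def
      by (simp add: continuous_on_eq_continuous_at)
    then have "(g \<longlongrightarrow> g (0,0)) (at (0,0))" by (simp add: isCont_def)
    then show ?thesis using assms(6) by (auto intro: tendsto_within_subset)
  qed
  assume "0 < loj_exp g f \<and> loj_exp g f < 1"
  then obtain x where "x \<in> {ereal \<alpha> | \<alpha>. \<alpha> > 0 \<and> (\<exists>C r. C > 0 \<and> r > 0 \<and>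
      (\<forall>p. norm p \<le> r \<longrightarrow> \<bar>f p\<bar> \<ge> C * \<bar>g p\<bar> powr \<alpha>))}" "x < 1"
    unfolding loj_exp_def by (auto simp: Inf_less_iff)
  then obtain \<alpha> C r where a: "\<alpha> > 0" "\<alpha> < 1" "C > 0" "r > 0"
    and b: "\<And>p. norm p \<le> r \<Longrightarrow> \<bar>f p\<bar> \<ge> C * \<bar>g p\<bar> powr \<alpha>" by auto
  show "((\<lambda>p. g p / f p) \<longlongrightarrow> 0) ?F"
  proof (rule Lim_null_comparison)
    show "\<forall>\<^sub>F p in ?F. norm (g p / f p) \<le> \<bar>g p\<bar> powr (1 - \<alpha>) / C"
      unfolding eventually_at
    proof (intro exI[of _ r] conjI ballI impI)
      fix p :: "real \<times> real" assume p: "p \<in> {p. f p \<noteq> 0}" "p \<noteq> (0,0) \<and> dist p (0,0) < r"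
      then have np: "norm p \<le> r" by (simp add: dist_norm zero_prod_def[symmetric])
      show "norm (g p / f p) \<le> \<bar>g p\<bar> powr (1 - \<alpha>) / C"
      proof (cases "g p = 0")
        case True then show ?thesis by simp
      next
        case False
        have fp: "\<bar>f p\<bar> > 0" using p by simp
        have gp: "\<bar>g p\<bar> > 0" using False by simp
        have "norm (g p / f p) = \<bar>g p\<bar> / \<bar>f p\<bar>" by (simp add: abs_divide)
        also have "\<dots> \<le> \<bar>g p\<bar> / (C * \<bar>g p\<bar> powr \<alpha>)"
          using b[OF np] gp fp a by (intro divide_left_mono) (auto intro!: mult_pos_pos)
        also have "\<dots> = \<bar>g p\<bar> powr (1 - \<alpha>) / C"
          using gp a by (simp add: powr_diff)
        finally show ?thesis .
      qed
    qed (use a in auto)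
    have "((\<lambda>p. \<bar>g p\<bar> powr (1 - \<alpha>)) \<longlongrightarrow> 0) ?F"
      by (rule tendsto_zero_powrI[where b="1 - \<alpha>"]) (use a gc tendsto_rabs_zero in auto)
    then show "((\<lambda>p. \<bar>g p\<bar> powr (1 - \<alpha>) / C) \<longlongrightarrow> 0) ?F"
      using tendsto_divide_zero by blast
  qed
next
  let ?F = "at (0::real,0::real) within {p. f p \<noteq> 0}"
  assume L: "loj_exp g f > 1"
  show "\<not> (\<exists>l::real. ((\<lambda>p. g p / f p) \<longlongrightarrow> l) ?F)"
  proof
    assume "\<exists>l::real. ((\<lambda>p. g p / f p) \<longlongrightarrow> l) ?F"
    then obtain l where "((\<lambda>p. g p / f p) \<longlongrightarrow> l) ?F" by blast
    then have "((\<lambda>p. norm (g p / f p)) \<longlongrightarrow> norm l) ?F" by (rule tendsto_norm)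
    then have "\<forall>\<^sub>F p in ?F. norm (g p / f p) < norm l + 1"
      by (rule order_tendstoD) simp
    then obtain d where d: "d > 0" "\<And>p. p \<in> {p. f p \<noteq> 0} \<Longrightarrow> p \<noteq> (0,0) \<and> dist p (0,0) < d
        \<Longrightarrow> norm (g p / f p) < norm l + 1"
      unfolding eventually_at by blast
    obtain r0 where r0: "r0 > 0" "\<And>p. norm p < r0 \<Longrightarrow> f p = 0 \<Longrightarrow> g p = 0" using assms(9) by blast
    define r where "r = min d r0 / 2"
    define C where "C = 1 / (norm l + 1)"
    have rp: "r > 0" "C > 0" using d r0 by (auto simp: r_def C_def)
    have "\<forall>p. norm p \<le> r \<longrightarrow> \<bar>f p\<bar> \<ge> C * \<bar>g p\<bar> powr 1"
    proof (intro allI impI)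
      fix p :: "real \<times> real" assume np: "norm p \<le> r"
      show "\<bar>f p\<bar> \<ge> C * \<bar>g p\<bar> powr 1"
      proof (cases "f p = 0")
        case True
        then have "g p = 0" using r0 np rp by (auto simp: r_def)
        then show ?thesis by simp
      next
        case False
        then have "p \<noteq> (0,0)" using assms(5) by auto
        moreover have "dist p (0,0) < d" using np d r0 by (simp add: dist_norm r_def zero_prod_def[symmetric])
        ultimately have "norm (g p / f p) < norm l + 1" using d False by auto
        then have "\<bar>g p\<bar> / \<bar>f p\<bar> < norm l + 1" by (simp add: abs_divide)
        then have "\<bar>g p\<bar> < (norm l + 1) * \<bar>f p\<bar>" using False by (simp add: divide_less_eq)
        then show ?thesis unfolding C_def
          by (simp add: field_simps)
      qed
    qed
    then have "ereal 1 \<in> {ereal \<alpha> | \<alpha>. \<alpha> > 0 \<and> (\<exists>C r. C > 0 \<and> r > 0 \<and>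
      (\<forall>p. norm p \<le> r \<longrightarrow> \<bar>f p\<bar> \<ge> C * \<bar>g p\<bar> powr \<alpha>))}"
    proof -
      have "(1::real) > 0 \<and> (\<exists>C r. C > 0 \<and> r > 0 \<and>
      (\<forall>p. norm p \<le> r \<longrightarrow> \<bar>f p\<bar> \<ge> C * \<bar>g p\<bar> powr 1))"
        apply (rule conjI, simp, rule exI[of _ C], rule exI[of _ r])
        using rp \<open>\<forall>p. norm p \<le> r \<longrightarrow> _\<close> by blast
      then show ?thesis by blast
    qed
    then have "loj_exp g f \<le> ereal 1" unfolding loj_exp_def by (rule Inf_lower)
    moreover have "ereal 1 = 1" by (simp add: one_ereal_def)
    ultimately show False using L by auto
  qed
qed

end
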